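(* Let $R$ be a discrete valuation ring with maximal ideal $\mathfrak{m}$, and let $M$ be an $R$-module with $M\cong\bigoplus_{1\le i\le n}R/\mathfrak{m}^{k_i}$, where $k_1\ge\cdots\ge k_n$ are non-negative integers. Let $N$ be a quotient of $M$ generated by $j$ elements, where $j\le n$. Then the length satisfies $l(N)\le k_1+\cdots+k_j$. Moreover, if equality holds, then $N$ is a direct summand of $M$. *)

theory Defs
  imports Main "HOL-Library.Extended_Nat"
begin

definition ring_ideal :: "'a::comm_ring_1 set \<Rightarrow> bool" where
  "ring_ideal I \<longleftrightarrow> module.subspace ((*) :: 'a \<Rightarrow> 'a \<Rightarrow> 'a) I"

definition principal_ideal :: "'a::comm_ring_1 set \<Rightarrow> bool" where
  "principal_ideal I \<longleftrightarrow> (\<exists>a. I = {a * x | x. True})"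

definition maximal_ideal :: "'a::comm_ring_1 set \<Rightarrow> bool" where
  "maximal_ideal I \<longleftrightarrow> ring_ideal I \<and> I \<noteq> UNIV \<and>
     (\<forall>J. ring_ideal J \<and> I \<subseteq> J \<longrightarrow> J = I \<or> J = UNIV)"

definition is_DVR :: "'a::idom itself \<Rightarrow> bool" where
  "is_DVR _ \<longleftrightarrow> (\<forall>I::'a set. ring_ideal I \<longrightarrow> principal_ideal I)
     \<and> (\<exists>!m::'a set. maximal_ideal m)
     \<and> (\<exists>x::'a. x \<noteq> 0 \<and> \<not> x dvd 1)"

definition ideal_prod :: "'a::comm_ring_1 set \<Rightarrow> 'a set \<Rightarrow> 'a set" where
  "ideal_prod I J = module.span ((*) :: 'a \<Rightarrow> 'a \<Rightarrow> 'a) {x * y | x y. x \<in> I \<and> y \<in> J}"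

fun ideal_pow :: "'a::comm_ring_1 set \<Rightarrow> nat \<Rightarrow> 'a set" where
  "ideal_pow I 0 = UNIV"
| "ideal_pow I (Suc k) = ideal_prod I (ideal_pow I k)"

text \<open>The module (scalar multiplication s) is isomorphic to the direct sum
  of R/m^(k i), i < n: there are elements e i (the images of the standard generators)
  such that the map ([r_i])_i \<mapsto> \<Sum> r_i e_i from the direct sum is well defined,
  injective and surjective, i.e. \<Sum> r_i e_i = 0 iff every r_i \<in> m^(k i), and
  every element is of this form.\<close>
definition iso_sum_cyclic ::
  "('a::comm_ring_1 \<Rightarrow> 'm::ab_group_add \<Rightarrow> 'm) \<Rightarrow> 'a set \<Rightarrow> (nat \<Rightarrow> nat) \<Rightarrow> nat \<Rightarrow> bool" where
  "iso_sum_cyclic s m k n \<longleftrightarrow> (\<exists>e :: nat \<Rightarrow> 'm.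
      (\<forall>x. \<exists>r. x = (\<Sum>i<n. s (r i) (e i))) \<and>
      (\<forall>r. (\<Sum>i<n. s (r i) (e i)) = 0 \<longleftrightarrow> (\<forall>i<n. r i \<in> ideal_pow m (k i))))"

definition module_length :: "('a::comm_ring_1 \<Rightarrow> 'm::ab_group_add \<Rightarrow> 'm) \<Rightarrow> enat" where
  "module_length s = Sup {enat l | l. \<exists>c :: nat \<Rightarrow> 'm set.
      (\<forall>i\<le>l. module.subspace s (c i)) \<and> (\<forall>i<l. c i \<subset> c (Suc i))}"

definition iso_direct_summand ::
  "('a::comm_ring_1 \<Rightarrow> 'n::ab_group_add \<Rightarrow> 'n) \<Rightarrow> ('a \<Rightarrow> 'm::ab_group_add \<Rightarrow> 'm) \<Rightarrow> bool" where
  "iso_direct_summand sN sM \<longleftrightarrow> (\<exists>A B. module.subspace sM A \<and> module.subspace sM B \<and>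
      A \<inter> B = {0} \<and> (\<forall>x. \<exists>a\<in>A. \<exists>b\<in>B. x = a + b) \<and>
      (\<exists>h. module_hom sN sM h \<and> inj h \<and> range h = A))"

end

theory Submission imports Defs begin

lemma module_times: "module ((*) :: 'a::comm_ring_1 \<Rightarrow> 'a \<Rightarrow> 'a)"
  by unfold_locales (auto simp: algebra_simps)

lemma ideal_def': "ring_ideal (I::'a::comm_ring_1 set) \<longleftrightarrow> 0 \<in> I \<and> (\<forall>x\<in>I. \<forall>y\<in>I. x + y \<in> I) \<and> (\<forall>c. \<forall>x\<in>I. c * x \<in> I)"
  unfolding ring_ideal_def module.subspace_def[OF module_times] by simp

lemma dvr_local:
  fixes m :: "'a::idom set"
  assumes dvr: "is_DVR TYPE('a)" and max: "maximal_ideal m" and r: "\<not> r dvd 1"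
  shows "r \<in> m"
proof -
  let ?A = "{J. ring_ideal J \<and> {r*x|x. True} \<subseteq> J \<and> (1::'a) \<notin> J}"
  have rR: "{r*x|x. True} \<in> ?A"
  proof (intro CollectI conjI)
    show "ring_ideal {r*x|x. True}" unfolding ideal_def'
    proof (intro conjI ballI allI)
      show "0 \<in> {r*x|x. True}" by (rule CollectI, rule exI[of _ 0]) simp
      fix a b assume "a \<in> {r*x|x. True}" "b \<in> {r*x|x. True}"
      then obtain x y where "a = r * x" "b = r * y" by blast
      then show "a + b \<in> {r*x|x. True}" by (intro CollectI exI[of _ "x + y"]) (simp add: distrib_left)
    next
      fix c a assume "a \<in> {r*x|x. True}"
      then obtain x where "a = r * x" by blast
      then show "c * a \<in> {r*x|x. True}" by (intro CollectI exI[of _ "c * x"]) (simp add: ac_simps)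
    qed
    show "{r*x|x. True} \<subseteq> {r*x|x. True}" by simp
    show "1 \<notin> {r*x|x. True}"
    proof
      assume "1 \<in> {r*x|x. True}"
      then obtain x where "1 = r * x" by blast
      then show False using r by (metis dvdI)
    qed
  qed
  have "\<exists>M\<in>?A. \<forall>X\<in>?A. M \<subseteq> X \<longrightarrow> X = M"
  proof (rule subset_Zorn_nonempty)
    show "?A \<noteq> {}" using rR by blast
    fix C assume ne: "C \<noteq> {}" and ch: "subset.chain ?A C"
    then have CA: "C \<subseteq> ?A" and cmp: "\<And>X Y. X \<in> C \<Longrightarrow> Y \<in> C \<Longrightarrow> X \<subseteq> Y \<or> Y \<subseteq> X"
      by (auto simp: subset.chain_def)
    show "\<Union>C \<in> ?A"
    proof (intro CollectI conjI)
      show "ring_ideal (\<Union>C)"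
        unfolding ideal_def'
      proof (intro conjI ballI allI)
        obtain X where "X \<in> C" using ne by blast
        then have "ring_ideal X" using CA by blast
        then show "0 \<in> \<Union>C" using \<open>X \<in> C\<close> unfolding ideal_def' by blast
        fix x y assume "x \<in> \<Union>C" "y \<in> \<Union>C"
        then obtain X Y where XY: "X \<in> C" "Y \<in> C" "x \<in> X" "y \<in> Y" by auto
        have iX: "ring_ideal X" and iY: "ring_ideal Y" using XY CA by auto
        show "x + y \<in> \<Union>C"
        proof (cases "X \<subseteq> Y")
          case True
          then have "x + y \<in> Y" using iY XY unfolding ideal_def' by blast
          then show ?thesis using XY by blast
        next
          case False
          then have "Y \<subseteq> X" using cmp[OF XY(1,2)] by blast
          then have "x + y \<in> X" using iX XY unfolding ideal_def' by blast
          then show ?thesis using XY by blast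
        qed
      next
        fix c x assume "x \<in> \<Union>C"
        then obtain X where X: "X \<in> C" "x \<in> X" by blast
        then have "ring_ideal X" using CA by blast
        then have "c * x \<in> X" using X unfolding ideal_def' by blast
        then show "c * x \<in> \<Union>C" using X by blast
      qed
      show "{r*x|x. True} \<subseteq> \<Union>C" using ne CA by blast
      show "1 \<notin> \<Union>C" using CA by blast
    qed
  qed
  then obtain M where M: "M \<in> ?A" and Mmax: "\<forall>X\<in>?A. M \<subseteq> X \<longrightarrow> X = M" by blast
  have "maximal_ideal M"
    unfolding maximal_ideal_def
  proof (intro conjI allI impI)
    show "ring_ideal M" using M by simp
    show "M \<noteq> UNIV" using M by auto
    fix J assume J: "ring_ideal J \<and> M \<subseteq> J"
    show "J = M \<or> J = UNIV"
    proof (cases "1 \<in> J")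
      case True
      then have "\<forall>c. c * 1 \<in> J" using J unfolding ideal_def' by blast
      then have "\<forall>c. c \<in> J" by simp
      then show ?thesis by auto
    next
      case False
      then have "J \<in> ?A" using J M by auto
      then show ?thesis using Mmax J by auto
    qed
  qed
  moreover have ex: "\<exists>!m::'a set. maximal_ideal m" using dvr unfolding is_DVR_def by (elim conjE)
  ultimately have "M = m" using max by (elim ex1E) blast
  have "{r*x|x. True} \<subseteq> M" using M by simp
  then have "r * 1 \<in> M" by blast
  then show ?thesis using \<open>M = m\<close> by simp
qed

lemma dvr_principal:
  fixes m :: "'a::idom set"
  assumes dvr: "is_DVR TYPE('a)" and max: "maximal_ideal m"
  shows "\<exists>p. m = {p * x | x. True}"
proof -
  have "ring_ideal m" using max unfolding maximal_ideal_def by blast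
  moreover have "\<forall>I::'a set. ring_ideal I \<longrightarrow> principal_ideal I" using dvr unfolding is_DVR_def by blast
  ultimately have "principal_ideal m" by blast
  then show ?thesis unfolding principal_ideal_def .
qed

lemma ideal_pow_eq:
  fixes p :: "'a::comm_ring_1"
  assumes "m = {p * x | x. True}"
  shows "ideal_pow m t = {p^t * x | x. True}"
proof (induction t)
  case 0 then show ?case by auto
next
  case (Suc t)
  have S: "{x * y |x y. x \<in> m \<and> y \<in> ideal_pow m t} = {p^Suc t * x | x. True}"
  proof
    show "{x * y |x y. x \<in> m \<and> y \<in> ideal_pow m t} \<subseteq> {p^Suc t * x | x. True}"
    proof
      fix z assume "z \<in> {x * y |x y. x \<in> m \<and> y \<in> ideal_pow m t}"
      then obtain x y where xy: "z = x * y" "x \<in> m" "y \<in> ideal_pow m t" by blast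
      obtain a where "x = p * a" using xy(2) assms by blast
      moreover obtain b where "y = p^t * b" using xy(3) Suc.IH by blast
      ultimately have "z = (p * a) * (p^t * b)" using xy by simp
      then have "z = p^Suc t * (a * b)" by (simp add: ac_simps)
      then show "z \<in> {p^Suc t * x | x. True}" by blast
    qed
    show "{p^Suc t * x | x. True} \<subseteq> {x * y |x y. x \<in> m \<and> y \<in> ideal_pow m t}"
    proof
      fix z assume "z \<in> {p^Suc t * x | x. True}"
      then obtain a where "z = p^Suc t * a" by blast
      then have "z = (p * a) * (p^t * 1)" by (simp add: ac_simps)
      moreover have "p * a \<in> m" using assms by blast
      moreover have "p^t * 1 \<in> ideal_pow m t" using Suc.IH by blast
      ultimately show "z \<in> {x * y |x y. x \<in> m \<and> y \<in> ideal_pow m t}" by blast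
    qed
  qed
  have "module.subspace ((*) :: 'a \<Rightarrow> 'a \<Rightarrow> 'a) {p^Suc t * x | x. True}"
    unfolding module.subspace_def[OF module_times]
  proof (intro conjI ballI allI)
    show "0 \<in> {p^Suc t * x | x. True}" by (rule CollectI, rule exI[of _ 0]) simp
    fix a b assume "a \<in> {p^Suc t * x | x. True}" "b \<in> {p^Suc t * x | x. True}"
    then obtain x y where "a = p^Suc t * x" "b = p^Suc t * y" by blast
    then show "a + b \<in> {p^Suc t * x | x. True}" by (intro CollectI exI[of _ "x + y"]) (simp add: distrib_left)
  next
    fix c a assume "a \<in> {p^Suc t * x | x. True}"
    then obtain x where "a = p^Suc t * x" by blast
    then show "c * a \<in> {p^Suc t * x | x. True}" by (intro CollectI exI[of _ "c * x"]) (simp add: ac_simps)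
  qed
  then have "module.span ((*) :: 'a \<Rightarrow> 'a \<Rightarrow> 'a) {p^Suc t * x | x. True} = {p^Suc t * x | x. True}"
    by (rule module.span_eq_iff[OF module_times, THEN iffD2])
  moreover have "ideal_pow m (Suc t) = module.span ((*) :: 'a \<Rightarrow> 'a \<Rightarrow> 'a) {x * y |x y. x \<in> m \<and> y \<in> ideal_pow m t}"
    by (simp add: ideal_prod_def)
  ultimately show ?case using S by simp
qed


definition chainin :: "('a::comm_ring_1 \<Rightarrow> 'n::ab_group_add \<Rightarrow> 'n) \<Rightarrow> 'n set \<Rightarrow> 'n set \<Rightarrow> (nat \<Rightarrow> 'n set) \<Rightarrow> nat \<Rightarrow> bool" where
  "chainin s W V c l \<longleftrightarrow> (\<forall>i\<le>l. module.subspace s (c i) \<and> W \<subseteq> c i \<and> c i \<subseteq> V) \<and> (\<forall>i<l. c i \<subset> c (Suc i))"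

definition bnd :: "('a::comm_ring_1 \<Rightarrow> 'n::ab_group_add \<Rightarrow> 'n) \<Rightarrow> 'n set \<Rightarrow> 'n set \<Rightarrow> nat \<Rightarrow> bool" where
  "bnd s W V b \<longleftrightarrow> (\<forall>c l. chainin s W V c l \<longrightarrow> l \<le> b)"

definition ssum :: "'n::ab_group_add set \<Rightarrow> 'n set \<Rightarrow> 'n set" where
  "ssum P Q = {x + y | x y. x \<in> P \<and> y \<in> Q}"

lemma extract_chain:
  assumes "\<forall>i\<le>l. module.subspace s (d i) \<and> X \<subseteq> d i \<and> d i \<subseteq> Y" "\<forall>i<l. d i \<subseteq> d (Suc i)"
  shows "\<exists>c. chainin s X Y c (card {i. i < l \<and> d i \<noteq> d (Suc i)}) \<and> c (card {i. i < l \<and> d i \<noteq> d (Suc i)}) = d l"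
  using assms
proof (induction l)
  case 0
  then show ?case by (rule_tac x="\<lambda>_. d 0" in exI) (auto simp: chainin_def)
next
  case (Suc l)
  then obtain c where c: "chainin s X Y c (card {i. i < l \<and> d i \<noteq> d (Suc i)})"
    "c (card {i. i < l \<and> d i \<noteq> d (Suc i)}) = d l" by auto
  let ?N = "card {i. i < l \<and> d i \<noteq> d (Suc i)}"
  show ?case
  proof (cases "d l = d (Suc l)")
    case True
    then have "{i. i < Suc l \<and> d i \<noteq> d (Suc i)} = {i. i < l \<and> d i \<noteq> d (Suc i)}"
      using less_Suc_eq by auto
    then show ?thesis using c True by auto
  next
    case False
    then have E: "{i. i < Suc l \<and> d i \<noteq> d (Suc i)} = insert l {i. i < l \<and> d i \<noteq> d (Suc i)}"
      using less_Suc_eq by auto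
    have cd: "card {i. i < Suc l \<and> d i \<noteq> d (Suc i)} = Suc ?N"
      unfolding E by (subst card_insert_disjoint) auto
    show ?thesis unfolding cd
      apply (rule_tac x="c(Suc ?N := d (Suc l))" in exI)
      using c False Suc.prems
      apply (auto simp: chainin_def le_Suc_eq less_Suc_eq)
      done
  qed
qed

context module
begin

lemma subspace_ssum: "subspace P \<Longrightarrow> subspace Q \<Longrightarrow> subspace (ssum P Q)"
proof -
  assume P: "subspace P" and Q: "subspace Q"
  show ?thesis unfolding subspace_def ssum_def
  proof (intro conjI ballI allI)
    show "0 \<in> {x + y |x y. x \<in> P \<and> y \<in> Q}" using P Q subspace_0 by force
  next
    fix u v assume "u \<in> {x + y |x y. x \<in> P \<and> y \<in> Q}" "v \<in> {x + y |x y. x \<in> P \<and> y \<in> Q}"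
    then obtain x y x' y' where "u = x + y" "v = x' + y'" "x \<in> P" "y \<in> Q" "x' \<in> P" "y' \<in> Q" by auto
    then show "u + v \<in> {x + y |x y. x \<in> P \<and> y \<in> Q}"
      using P Q subspace_add by (rule_tac CollectI, rule_tac x="x + x'" in exI, rule_tac x="y+y'" in exI) (auto simp: algebra_simps)
  next
    fix c u assume "u \<in> {x + y |x y. x \<in> P \<and> y \<in> Q}"
    then obtain x y where "u = x + y" "x \<in> P" "y \<in> Q" by auto
    then show "c *s u \<in> {x + y |x y. x \<in> P \<and> y \<in> Q}"
      using P Q subspace_scale by (rule_tac CollectI, rule_tac x="c *s x" in exI, rule_tac x="c *s y" in exI) (auto simp: algebra_simps)
  qed
qed

lemma sub_diffI: "subspace W \<Longrightarrow> x - y \<in> W \<Longrightarrow> y \<in> W \<Longrightarrow> x \<in> W"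
proof -
  assume W: "subspace W" and a: "x - y \<in> W" and b: "y \<in> W"
  have "(x - y) + y \<in> W" by (rule subspace_add[OF W a b])
  then show "x \<in> W" by simp
qed

lemma sub_scale_diffI: "subspace W \<Longrightarrow> x - y \<in> W \<Longrightarrow> scale c y \<in> W \<Longrightarrow> scale c x \<in> W"
proof -
  assume W: "subspace W" and d: "x - y \<in> W" and y: "scale c y \<in> W"
  have "scale c x - scale c y = scale c (x - y)" by (simp add: scale_right_diff_distrib)
  then have "scale c x - scale c y \<in> W" using subspace_scale[OF W d] by simp
  then show ?thesis using sub_diffI[OF W _ y] by blast
qed

lemma sub_sum_notin: "subspace W \<Longrightarrow> sum h A \<notin> W \<Longrightarrow> \<exists>i\<in>A. h i \<notin> W"
proof (rule ccontr)
  assume W: "subspace W" and n: "sum h A \<notin> W" and c: "\<not> (\<exists>i\<in>A. h i \<notin> W)"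
  then have "\<And>i. i \<in> A \<Longrightarrow> h i \<in> W" by blast
  then have "sum h A \<in> W" by (rule subspace_sum[OF W])
  then show False using n by simp
qed

lemma subadd:
  assumes B: "subspace B" and V: "subspace V" and WB: "W \<subseteq> B" and BV: "B \<subseteq> V"
    and b1: "bnd scale W B a" and b2: "bnd scale B V b"
  shows "bnd scale W V (a + b)"
  unfolding bnd_def
proof (intro allI impI)
  fix c l assume c: "chainin scale W V c l"
  let ?d1 = "\<lambda>i. c i \<inter> B" and ?d2 = "\<lambda>i. ssum (c i) B"
  have cm: "\<forall>i<l. c i \<subseteq> c (Suc i)" using c unfolding chainin_def by auto
  have d1: "\<forall>i\<le>l. subspace (?d1 i) \<and> W \<subseteq> ?d1 i \<and> ?d1 i \<subseteq> B"
    using c WB B subspace_inter unfolding chainin_def by auto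
  have d1m: "\<forall>i<l. ?d1 i \<subseteq> ?d1 (Suc i)" using cm by auto
  obtain c1 where c1: "chainin scale W B c1 (card {i. i < l \<and> ?d1 i \<noteq> ?d1 (Suc i)})"
    using extract_chain[OF d1 d1m] by blast
  have d2: "\<forall>i\<le>l. subspace (?d2 i) \<and> B \<subseteq> ?d2 i \<and> ?d2 i \<subseteq> V"
  proof (intro allI impI conjI)
    fix i assume i: "i \<le> l"
    then have ci: "subspace (c i)" "c i \<subseteq> V" using c by (auto simp: chainin_def)
    show "subspace (?d2 i)" using ci B subspace_ssum by auto
    show "B \<subseteq> ?d2 i" unfolding ssum_def using ci(1) subspace_0 by force
    show "?d2 i \<subseteq> V" unfolding ssum_def using ci(2) BV V subspace_add by blast
  qed
  have d2m: "\<forall>i<l. ?d2 i \<subseteq> ?d2 (Suc i)" using cm unfolding ssum_def by blast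
  obtain c2 where c2: "chainin scale B V c2 (card {i. i < l \<and> ?d2 i \<noteq> ?d2 (Suc i)})"
    using extract_chain[OF d2 d2m] by blast
  have "{..<l} \<subseteq> {i. i < l \<and> ?d1 i \<noteq> ?d1 (Suc i)} \<union> {i. i < l \<and> ?d2 i \<noteq> ?d2 (Suc i)}"
  proof
    fix i assume i: "i \<in> {..<l}"
    then have sub: "c i \<subset> c (Suc i)" using c by (auto simp: chainin_def)
    have sc: "subspace (c (Suc i))" using c i by (auto simp: chainin_def)
    show "i \<in> {i. i < l \<and> ?d1 i \<noteq> ?d1 (Suc i)} \<union> {i. i < l \<and> ?d2 i \<noteq> ?d2 (Suc i)}"
    proof (rule ccontr)
      assume "\<not> ?thesis"
      then have e1: "?d1 i = ?d1 (Suc i)" and e2: "?d2 i = ?d2 (Suc i)" using i by auto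
      have "c (Suc i) \<subseteq> c i"
      proof
        fix y assume y: "y \<in> c (Suc i)"
        have "y \<in> ?d2 (Suc i)" unfolding ssum_def using y B subspace_0 by force
        then have "y \<in> ?d2 i" using e2 by simp
        then obtain x z where xz: "y = x + z" "x \<in> c i" "z \<in> B" unfolding ssum_def by blast
        then have "z = y - x" by simp
        moreover have "x \<in> c (Suc i)" using xz sub by auto
        ultimately have "z \<in> c (Suc i)" using y sc subspace_diff by auto
        then have "z \<in> c i" using e1 xz by auto
        then show "y \<in> c i" using xz c i subspace_add unfolding chainin_def by auto
      qed
      then show False using sub by auto
    qed
  qed
  then have "l \<le> card ({i. i < l \<and> ?d1 i \<noteq> ?d1 (Suc i)} \<union> {i. i < l \<and> ?d2 i \<noteq> ?d2 (Suc i)})"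
    using card_mono[of "{i. i < l \<and> ?d1 i \<noteq> ?d1 (Suc i)} \<union> {i. i < l \<and> ?d2 i \<noteq> ?d2 (Suc i)}" "{..<l}"]
    by simp
  also have "\<dots> \<le> card {i. i < l \<and> ?d1 i \<noteq> ?d1 (Suc i)} + card {i. i < l \<and> ?d2 i \<noteq> ?d2 (Suc i)}"
    by (rule card_Un_le)
  also have "\<dots> \<le> a + b" using c1 c2 b1 b2 unfolding bnd_def by (meson add_le_mono)
  finally show "l \<le> a + b" .
qed

lemma bnd_eq: "bnd scale W W 0"
  unfolding bnd_def
proof (intro allI impI)
  fix c l assume c: "chainin scale W W c l"
  show "l \<le> 0"
  proof (rule ccontr)
    assume "\<not> l \<le> 0"
    then have l1: "0 < l" "1 \<le> l" by auto
    have ch: "\<forall>i\<le>l. subspace (c i) \<and> W \<subseteq> c i \<and> c i \<subseteq> W" "\<forall>i<l. c i \<subset> c (Suc i)"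
      using c unfolding chainin_def by blast+
    have "c 0 \<subset> c (Suc 0)" using ch(2) l1 by blast
    moreover have "c 0 = W" using ch(1) by blast
    moreover have "c (Suc 0) = W" using ch(1) l1 by auto
    ultimately show False by simp
  qed
qed

end


definition Rsp :: "('a::comm_ring_1 \<Rightarrow> 'n::ab_group_add \<Rightarrow> 'n) \<Rightarrow> 'n set \<Rightarrow> 'n \<Rightarrow> 'n set" where
  "Rsp s W g = {w + s t g | w t. w \<in> W}"

context module
begin

lemma subspace_Rsp: "subspace W \<Longrightarrow> subspace (Rsp scale W g)"
proof -
  assume W: "subspace W"
  show ?thesis unfolding subspace_def Rsp_def
  proof (intro conjI ballI allI)
    show "0 \<in> {w + scale t g |w t. w \<in> W}" using W subspace_0 by (rule_tac CollectI, rule_tac x=0 in exI, rule_tac x=0 in exI) auto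
  next
    fix u v assume "u \<in> {w + scale t g |w t. w \<in> W}" "v \<in> {w + scale t g |w t. w \<in> W}"
    then obtain x y x' y' where "u = x + scale y g" "v = x' + scale y' g" "x \<in> W" "x' \<in> W" by auto
    then show "u + v \<in> {w + scale t g |w t. w \<in> W}"
      using W subspace_add by (rule_tac CollectI, rule_tac x="x + x'" in exI, rule_tac x="y+y'" in exI) (auto simp: algebra_simps)
  next
    fix c u assume "u \<in> {w + scale t g |w t. w \<in> W}"
    then obtain x y where "u = x + scale y g" "x \<in> W" by auto
    then show "scale c u \<in> {w + scale t g |w t. w \<in> W}"
      using W subspace_scale by (rule_tac CollectI, rule_tac x="scale c x" in exI, rule_tac x="c * y" in exI) (auto simp: algebra_simps)
  qed
qed

lemma W_Rsp: "W \<subseteq> Rsp scale W g"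
proof
  fix w assume "w \<in> W"
  moreover have "w = w + scale 0 g" by simp
  ultimately show "w \<in> Rsp scale W g" unfolding Rsp_def by blast
qed

lemma g_Rsp: "subspace W \<Longrightarrow> g \<in> Rsp scale W g"
  unfolding Rsp_def using subspace_0 by (auto intro!: exI[of _ 0] exI[of _ 1])

lemma Rsp_sub: "subspace V \<Longrightarrow> W \<subseteq> V \<Longrightarrow> g \<in> V \<Longrightarrow> Rsp scale W g \<subseteq> V"
  unfolding Rsp_def using subspace_add subspace_scale by blast

lemma Rsp_in: "g \<in> W \<Longrightarrow> subspace W \<Longrightarrow> Rsp scale W g = W"
  using Rsp_sub W_Rsp by blast

end

locale dvrmod = module s for s :: "'a::idom \<Rightarrow> 'n::ab_group_add \<Rightarrow> 'n" +
  fixes m :: "'a set" and p :: 'a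
  assumes max: "maximal_ideal m" and mp: "m = {p*x|x. True}" and loc: "\<And>r. r \<notin> m \<Longrightarrow> r dvd 1"
begin

lemma one_step:
  assumes W: "subspace W" and pg: "s p g \<in> W"
  shows "bnd s W (Rsp s W g) 1"
proof -
  have dich: "U = W \<or> U = Rsp s W g" if U: "subspace U" "W \<subseteq> U" "U \<subseteq> Rsp s W g" for U
  proof -
    let ?I = "{t. s t g \<in> U}"
    have "ring_ideal ?I" unfolding ideal_def'
    proof (intro conjI ballI allI)
      show "0 \<in> ?I" using U subspace_0 by simp
      fix a b assume "a \<in> ?I" "b \<in> ?I"
      then show "a + b \<in> ?I" using U subspace_add by (simp add: scale_left_distrib)
    next
      fix c a assume "a \<in> ?I"
      then have "s c (s a g) \<in> U" using U subspace_scale by blast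
      then show "c * a \<in> ?I" by simp
    qed
    moreover have "m \<subseteq> ?I"
    proof
      fix t assume "t \<in> m"
      then obtain x where x: "t = p * x" using mp by blast
      have "s x (s p g) \<in> U" using pg U subspace_scale by blast
      then show "t \<in> ?I" using x by (simp add: mult.commute)
    qed
    ultimately have "?I = m \<or> ?I = UNIV" using max unfolding maximal_ideal_def by blast
    then show ?thesis
    proof
      assume "?I = UNIV"
      then have "g \<in> U" by (metis UNIV_I mem_Collect_eq scale_one)
      then show ?thesis using Rsp_sub U by blast
    next
      assume I: "?I = m"
      have "U \<subseteq> W"
      proof
        fix u assume u: "u \<in> U"
        then obtain w t where wt: "u = w + s t g" "w \<in> W" using U unfolding Rsp_def by auto
        then have "s t g = u - w" by simp
        moreover have "w \<in> U" using wt U by blast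
        ultimately have "s t g \<in> U" using u subspace_diff[OF U(1)] by simp
        then have "t \<in> m" using I by auto
        then obtain x where "t = p * x" using mp by auto
        then have "s t g = s x (s p g)" by (simp add: mult.commute)
        moreover have "s x (s p g) \<in> W" using W pg subspace_scale by blast
        ultimately have "s t g \<in> W" by simp
        then show "u \<in> W" using wt W subspace_add by auto
      qed
      then show ?thesis using U by auto
    qed
  qed
  show ?thesis unfolding bnd_def
  proof (intro allI impI)
    fix c l assume c: "chainin s W (Rsp s W g) c l"
    show "l \<le> 1"
    proof (rule ccontr)
      assume "\<not> l \<le> 1"
      then have "c 0 \<subset> c 1" "c 1 \<subset> c 2" "c 0 \<in> {W, Rsp s W g}" "c 1 \<in> {W, Rsp s W g}" "c 2 \<in> {W, Rsp s W g}"
        using c dich unfolding chainin_def by (auto simp: numeral_2_eq_2)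
      then show False by auto
    qed
  qed
qed

lemma cyclic_bnd:
  assumes W: "subspace W"
  shows "s (p^K) g \<in> W \<Longrightarrow> bnd s W (Rsp s W g) K"
proof (induction K arbitrary: g)
  case 0
  then show ?case using Rsp_in[of g W] W bnd_eq by auto
next
  case (Suc K)
  let ?B = "Rsp s W (s p g)"
  have "s (p^K) (s p g) \<in> W" using Suc.prems by (simp add: mult.commute)
  then have b1: "bnd s W ?B K" using Suc.IH by blast
  have B: "subspace ?B" using subspace_Rsp W by auto
  have b2: "bnd s ?B (Rsp s ?B g) 1" using one_step[OF B] g_Rsp[OF W] by blast
  have eq: "Rsp s ?B g = Rsp s W g"
  proof
    show "Rsp s ?B g \<subseteq> Rsp s W g"
      using Rsp_sub[OF subspace_Rsp[OF W]] Rsp_sub[of "Rsp s W g" W "s p g"] subspace_Rsp[OF W]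
        g_Rsp[OF W] W_Rsp subspace_scale by (metis)
    show "Rsp s W g \<subseteq> Rsp s ?B g"
      by (meson B Rsp_sub W_Rsp dual_order.trans g_Rsp subspace_Rsp)
  qed
  have "bnd s W (Rsp s W g) (K + 1)"
    apply (rule subadd[OF B subspace_Rsp[OF W] W_Rsp])
    using eq b1 b2 Rsp_sub[OF subspace_Rsp[OF W] W_Rsp] g_Rsp[OF W] subspace_scale[OF subspace_Rsp[OF W]]
    by (auto simp: eq[symmetric] W_Rsp)
  then show ?case by simp
qed

lemma order_lemma:
  assumes W: "subspace W"
  shows "s (p^t) g \<notin> W \<Longrightarrow> s r g \<in> W \<Longrightarrow> p^(Suc t) dvd r"
proof (induction t arbitrary: g r)
  case 0
  have "r \<in> m"
  proof (rule ccontr)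
    assume "r \<notin> m"
    then obtain u where "1 = r * u" using loc by blast
    then have "g = s u (s r g)" by (metis mult.commute scale_one scale_scale)
    moreover have "s u (s r g) \<in> W" using "0.prems"(2) W subspace_scale by blast
    ultimately have "s (p^0) g \<in> W" by simp
    then show False using "0.prems"(1) by blast
  qed
  then show ?case using mp by auto
next
  case (Suc t)
  have "r \<in> m"
  proof (rule ccontr)
    assume "r \<notin> m"
    then obtain u where "1 = r * u" using loc by blast
    then have "g = s u (s r g)" by (metis mult.commute scale_one scale_scale)
    moreover have "s u (s r g) \<in> W" using Suc.prems(2) W subspace_scale by blast
    ultimately have "g \<in> W" by simp
    then have "s (p^Suc t) g \<in> W" using W subspace_scale by blast
    then show False using Suc.prems(1) by blast
  qed
  then obtain x where x: "r = p * x" using mp by auto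
  have "s (p^t) (s p g) \<notin> W" using Suc.prems by (simp add: mult.commute)
  moreover have "s x (s p g) \<in> W" using Suc.prems x by (simp add: mult.commute)
  ultimately have "p^Suc t dvd x" using Suc.IH by blast
  then show ?case using x by auto
qed

end


definition swp :: "nat \<Rightarrow> nat \<Rightarrow> nat" where
  "swp a i = (if i = 0 then a else if i = a then 0 else i)"

lemma swp_sum:
  fixes h :: "nat \<Rightarrow> 'b::comm_monoid_add"
  assumes "a < n"
  shows "(\<Sum>i<n. h i) = h a + (\<Sum>i<n - 1. h (swp a (Suc i)))"
proof -
  have "(\<Sum>i<n. h i) = (\<Sum>i<n. h (swp a i))"
    by (rule sum.reindex_bij_witness[where i="swp a" and j="swp a"]) (use assms in \<open>auto simp: swp_def\<close>)
  also have "\<dots> = h (swp a 0) + (\<Sum>i<n - 1. h (swp a (Suc i)))"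
    using assms sum.lessThan_Suc_shift[of "\<lambda>i. h (swp a i)" "n - 1"] by simp
  finally show ?thesis by (simp add: swp_def)
qed

lemma swp_lt: "a < n \<Longrightarrow> i < n - 1 \<Longrightarrow> swp a (Suc i) < n"
  by (auto simp: swp_def)


locale core_ctx = dvrmod sN m p + M: module sM
  for sN :: "'a::idom \<Rightarrow> 'n::ab_group_add \<Rightarrow> 'n" and m p and sM :: "'a \<Rightarrow> 'm::ab_group_add \<Rightarrow> 'm" +
  fixes f :: "'m \<Rightarrow> 'n"
  assumes fhom: "module_hom sM sN f"
begin

lemma fadd: "f (a + b) = f a + f b" using fhom module_hom.add by blast
lemma fsc: "f (sM c a) = sN c (f a)" using fhom module_hom.scale by blast
lemma fsum: "f (sum g A) = (\<Sum>a\<in>A. f (g a))" using fhom module_hom.sum by blast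
lemma fdiff: "f (a - b) = f a - f b" using fhom module_hom.diff by blast
lemma fzero: "f 0 = 0" using fhom module_hom.zero by blast

definition concl where
  "concl W V \<longleftrightarrow> (\<exists>A. M.subspace A \<and> (\<forall>a\<in>A. f a \<in> W \<longrightarrow> a = 0) \<and> (\<forall>v\<in>V. \<exists>a\<in>A. v - f a \<in> W) \<and> (\<forall>a\<in>A. f a \<in> V))"

lemma trivial_case:
  assumes "subspace W" "V \<subseteq> W" "W \<subseteq> V"
  shows "bnd sN W V b \<and> concl W V"
proof
  have "V = W" using assms by auto
  then show "bnd sN W V b" using bnd_eq unfolding bnd_def by (metis le0 le_zero_eq)
  show "concl W V" unfolding concl_def
    by (rule exI[of _ "{0}"]) (use assms subspace_0 fzero in auto)
qed


definition HH :: "nat \<Rightarrow> (nat \<Rightarrow> nat) \<Rightarrow> (nat \<Rightarrow> 'm) \<Rightarrow> (nat \<Rightarrow> 'n) \<Rightarrow> 'n set \<Rightarrow> 'n set \<Rightarrow> nat \<Rightarrow> bool" where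
  "HH n k e g W V j \<longleftrightarrow> (\<forall>i i'. i \<le> i' \<longrightarrow> i' < n \<longrightarrow> k i' \<le> k i) \<and> j \<le> n
   \<and> subspace W \<and> subspace V \<and> W \<subseteq> V
   \<and> (\<forall>i<n. sN (p^k i) (f (e i)) \<in> W) \<and> (\<forall>i<n. f (e i) \<in> V)
   \<and> (\<forall>v\<in>V. \<exists>r. v - f (\<Sum>i<n. sM (r i) (e i)) \<in> W)
   \<and> (\<forall>i<j. g i \<in> V) \<and> (\<forall>v\<in>V. \<exists>r. v - (\<Sum>i<j. sN (r i) (g i)) \<in> W)"

definition CC :: "nat \<Rightarrow> (nat \<Rightarrow> nat) \<Rightarrow> (nat \<Rightarrow> 'm) \<Rightarrow> 'n set \<Rightarrow> 'n set \<Rightarrow> nat \<Rightarrow> bool" where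
  "CC n k e W V j \<longleftrightarrow> bnd sN W V (\<Sum>i<j. k i) \<and> ((\<forall>i<n. sM (p^k i) (e i) = 0) \<and> (\<exists>c l. chainin sN W V c l \<and> l \<ge> (\<Sum>i<j. k i)) \<longrightarrow> concl W V)"

lemma core: "\<forall>n k e g W V j. (\<Sum>i<n. k i) = N \<longrightarrow> HH n k e g W V j \<longrightarrow> CC n k e W V j"
proof (induction N rule: less_induct)
  case (less N)
  show ?case
  proof (intro allI impI)
  fix n k e g W V j
  assume eqN: "(\<Sum>i<n. k i) = N" and Hyp: "HH n k e g W V j"
  have kmono: "\<And>i i'. i \<le> i' \<Longrightarrow> i' < n \<Longrightarrow> k i' \<le> k i" using Hyp unfolding HH_def by blast
  have jn: "j \<le> n" and W: "subspace W" and V: "subspace V" and WV: "W \<subseteq> V"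
    and H4: "\<forall>i<n. sN (p^k i) (f (e i)) \<in> W" and eV: "\<forall>i<n. f (e i) \<in> V"
    and H5: "\<forall>v\<in>V. \<exists>r. v - f (\<Sum>i<n. sM (r i) (e i)) \<in> W"
    and gV: "\<forall>i<j. g i \<in> V" and H6: "\<forall>v\<in>V. \<exists>r. v - (\<Sum>i<j. sN (r i) (g i)) \<in> W"
    using Hyp unfolding HH_def by blast+
  let ?S = "\<Sum>i<j. k i"
  have main: "bnd sN W V ?S \<and> ((\<forall>i<n. sM (p^k i) (e i) = 0) \<and> (\<exists>c l. chainin sN W V c l \<and> l \<ge> ?S) \<longrightarrow> concl W V)"
  proof (cases "V \<subseteq> W")
    case True
    then have tc: "bnd sN W V ?S \<and> concl W V" by (rule trivial_case[OF W _ WV])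
    then show ?thesis by blast
  next
    case notVW: False
    have j0: "j > 0"
    proof (rule ccontr)
      assume "\<not> 0 < j"
      then have "j = 0" by simp
      then have "V \<subseteq> W" using H6 by auto
      then show False using notVW by simp
    qed
    then have n0: "n > 0" using jn by simp
    define K where "K = k 0"
    have kK: "\<And>i. i < n \<Longrightarrow> k i \<le> K" unfolding K_def using kmono by blast
    have K0: "K > 0"
    proof (rule ccontr)
      assume "\<not> K > 0"
      then have k0: "\<And>i. i < n \<Longrightarrow> k i = 0" using kK by fastforce
      have "V \<subseteq> W"
      proof
        fix v assume v: "v \<in> V"
        then obtain r where r: "v - f (\<Sum>i<n. sM (r i) (e i)) \<in> W" using H5 by blast
        have fe: "f (\<Sum>i<n. sM (r i) (e i)) = (\<Sum>i<n. sN (r i) (f (e i)))" by (simp add: fsum fsc)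
        have "(\<Sum>i<n. sN (r i) (f (e i))) \<in> W"
        proof (rule subspace_sum[OF W])
          fix i assume "i \<in> {..<n}"
          then have "sN (p^k i) (f (e i)) \<in> W" using H4 by blast
          then have "f (e i) \<in> W" using k0 \<open>i \<in> {..<n}\<close> by simp
          then show "sN (r i) (f (e i)) \<in> W" by (rule subspace_scale[OF W])
        qed
        then have "(v - f (\<Sum>i<n. sM (r i) (e i))) + f (\<Sum>i<n. sM (r i) (e i)) \<in> W"
          unfolding fe[symmetric] by (rule subspace_add[OF W r])
        then show "v \<in> W" by simp
      qed
      then show False using notVW by simp
    qed
    show ?thesis
    proof (cases "\<forall>v\<in>V. sN (p^(K-1)) v \<in> W")
      case True
      define k' where "k' i = min (k i) (K - 1)" for i
      have le: "\<forall>i\<in>A. k' i \<le> k i" for A by (simp add: k'_def)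
      have "0 \<in> {..<n}" using n0 by simp
      moreover have "k' 0 < k 0" using K0 by (simp add: k'_def K_def)
      ultimately have "\<exists>a\<in>{..<n}. k' a < k a" by blast
      then have lt1: "(\<Sum>i<n. k' i) < (\<Sum>i<n. k i)" using sum_strict_mono_ex1[OF finite_lessThan le] by blast
      have "0 \<in> {..<j}" using j0 by simp
      then have "\<exists>a\<in>{..<j}. k' a < k a" using \<open>k' 0 < k 0\<close> by blast
      then have lt2: "(\<Sum>i<j. k' i) < ?S" using sum_strict_mono_ex1[OF finite_lessThan le] by blast
      have H4': "\<forall>i<n. sN (p^k' i) (f (e i)) \<in> W"
      proof (intro allI impI)
        fix i assume i: "i < n"
        show "sN (p^k' i) (f (e i)) \<in> W"
        proof (cases "k i \<le> K - 1")
          case True then show ?thesis using H4 i by (simp add: k'_def)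
        next
          case False then show ?thesis using \<open>\<forall>v\<in>V. sN (p^(K-1)) v \<in> W\<close> eV i by (simp add: k'_def)
        qed
      qed
      have kmono': "\<And>i i'. i \<le> i' \<Longrightarrow> i' < n \<Longrightarrow> k' i' \<le> k' i"
        using kmono by (simp add: k'_def min.coboundedI1)
      have "HH n k' e g W V j" unfolding HH_def using kmono' jn W V WV H4' eV H5 gV H6 by blast
      then have "CC n k' e W V j" using less.IH[OF lt1[unfolded eqN]] by blast
      then have IH: "bnd sN W V (\<Sum>i<j. k' i)" unfolding CC_def by blast
      have b: "bnd sN W V ?S" unfolding bnd_def
      proof (intro allI impI)
        fix c l assume "chainin sN W V c l"
        then have "l \<le> (\<Sum>i<j. k' i)" using IH unfolding bnd_def by blast
        then show "l \<le> ?S" using lt2 by simp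
      qed
      have nc: "\<not> (\<exists>c l. chainin sN W V c l \<and> l \<ge> ?S)"
      proof
        assume "\<exists>c l. chainin sN W V c l \<and> l \<ge> ?S"
        then obtain c l where "chainin sN W V c l" "l \<ge> ?S" by blast
        then have "l \<le> (\<Sum>i<j. k' i)" using IH unfolding bnd_def by blast
        then show False using lt2 \<open>l \<ge> ?S\<close> by simp
      qed
      show ?thesis using b nc by blast
    next
      case False
      then obtain v0 where v0: "v0 \<in> V" "sN (p^(K-1)) v0 \<notin> W" by blast
      obtain q where q: "q < j" "sN (p^(K-1)) (g q) \<notin> W"
      proof (rule ccontr)
        assume nt: "\<not> thesis"
        have allW: "\<forall>i<j. sN (p^(K-1)) (g i) \<in> W"
        proof (intro allI impI)
          fix i assume "i < j"
          show "sN (p^(K-1)) (g i) \<in> W"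
          proof (rule ccontr)
            assume "sN (p^(K-1)) (g i) \<notin> W"
            then have thesis using that \<open>i < j\<close> by blast
            then show False using nt by blast
          qed
        qed
        obtain r where r: "v0 - (\<Sum>i<j. sN (r i) (g i)) \<in> W" using H6 v0 by blast
        have "sN (p^(K-1)) (\<Sum>i<j. sN (r i) (g i)) = (\<Sum>i<j. sN (r i) (sN (p^(K-1)) (g i)))"
          unfolding scale_sum_right scale_scale by (simp add: mult.commute)
        moreover have "(\<Sum>i<j. sN (r i) (sN (p^(K-1)) (g i))) \<in> W"
        proof (rule subspace_sum[OF W])
          fix i assume "i \<in> {..<j}"
          then show "sN (r i) (sN (p^(K-1)) (g i)) \<in> W" using allW subspace_scale[OF W] by blast
        qed
        ultimately have "sN (p^(K-1)) (\<Sum>i<j. sN (r i) (g i)) \<in> W" by simp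
        then have "sN (p^(K-1)) v0 \<in> W" by (rule sub_scale_diffI[OF W r])
        then show False using v0 by simp
      qed
      define gq where "gq = g q"
      have gqV: "gq \<in> V" using gV q unfolding gq_def by simp
      obtain r0 where r0: "gq - f (\<Sum>i<n. sM (r0 i) (e i)) \<in> W" using H5 gqV by blast
      define x where "x = (\<Sum>i<n. sM (r0 i) (e i))"
      have fx: "f x = (\<Sum>i<n. sN (r0 i) (f (e i)))" unfolding x_def fsum fsc by simp
      have fxV: "f x \<in> V" unfolding fx
      proof (rule subspace_sum[OF V])
        fix i assume "i \<in> {..<n}"
        then show "sN (r0 i) (f (e i)) \<in> V" using eV subspace_scale[OF V] by blast
      qed
      have gx: "gq - f x \<in> W" using r0 x_def by simp
      have "sN (p^(K-1)) (f x) \<notin> W"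
      proof
        assume "sN (p^(K-1)) (f x) \<in> W"
        then have "sN (p^(K-1)) gq \<in> W" by (rule sub_scale_diffI[OF W gx])
        then show False using q gq_def by simp
      qed
      then have "(\<Sum>i<n. sN (p^(K-1)) (sN (r0 i) (f (e i)))) \<notin> W"
        unfolding fx scale_sum_right .
      then obtain pp where pp: "pp < n" "sN (p^(K-1)) (sN (r0 pp) (f (e pp))) \<notin> W"
        using sub_sum_notin[OF W] by blast
      have kpp: "k pp = K"
      proof (rule ccontr)
        assume "k pp \<noteq> K"
        moreover have "k pp \<le> K" using kK pp by blast
        ultimately have kle: "k pp \<le> K - 1" by linarith
        then have "K - 1 = (K - 1 - k pp) + k pp" by simp
        then have "p^(K-1) = p^(K - 1 - k pp) * p^(k pp)" by (metis power_add)
        then have "sN (p^(K-1)) (sN (r0 pp) (f (e pp))) = sN (r0 pp * p^(K - 1 - k pp)) (sN (p^k pp) (f (e pp)))"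
          by (simp add: ac_simps)
        moreover have "sN (r0 pp * p^(K - 1 - k pp)) (sN (p^k pp) (f (e pp))) \<in> W"
          using H4 pp(1) subspace_scale[OF W] by blast
        ultimately show False using pp(2) by simp
      qed
      have r0u: "r0 pp \<notin> m"
      proof
        assume "r0 pp \<in> m"
        then obtain y where y: "r0 pp = p * y" using mp by auto
        obtain K1 where K1: "K = Suc K1" using K0 by (cases K) auto
        have hp: "p^(K-1) * (p * y) = y * p^K" unfolding K1 by (simp add: ac_simps)
        have "sN (p^(K-1)) (sN (r0 pp) (f (e pp))) = sN y (sN (p^k pp) (f (e pp)))"
          by (simp only: scale_scale y kpp hp)
        moreover have "sN y (sN (p^k pp) (f (e pp))) \<in> W"
          using H4 pp(1) subspace_scale[OF W] by blast
        ultimately show False using pp(2) by simp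
      qed
      then obtain u where u: "1 = r0 pp * u" using loc by blast
      have kall: "\<And>i. i < n \<Longrightarrow> k (swp pp i) = k i"
      proof -
        fix i assume "i < n"
        have "k i = K" if "i \<le> pp" for i
        proof -
          have "k pp \<le> k i" using kmono[of i pp] that pp(1) by blast
          moreover have "k i \<le> K" using kK[of i] that pp(1) by simp
          ultimately show "k i = K" using kpp by simp
        qed
        note kK' = this
        show "k (swp pp i) = k i"
        proof (cases "i = 0")
          case True
          then show ?thesis using kpp by (simp add: swp_def K_def)
        next
          case False
          show ?thesis
          proof (cases "i = pp")
            case True
            then show ?thesis using kpp \<open>i \<noteq> 0\<close> by (simp add: swp_def K_def)
          next
            case False
            then show ?thesis using \<open>i \<noteq> 0\<close> by (simp add: swp_def)
          qed
        qed
      qed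
      define n' where "n' = n - 1"
      define j' where "j' = j - 1"
      define k' where "k' i = k (Suc i)" for i
      define e' where "e' i = e (swp pp (Suc i))" for i
      define g' where "g' i = g (swp q (Suc i))" for i
      define W' where "W' = Rsp sN W gq"
      have k'e: "\<And>i. i < n' \<Longrightarrow> k' i = k (swp pp (Suc i))" unfolding k'_def n'_def using kall by simp
      have sumk: "(\<Sum>i<n. k i) = K + (\<Sum>i<n'. k' i)"
        using sum.lessThan_Suc_shift[of k n'] n0 unfolding n'_def k'_def K_def by simp
      have sumS: "?S = K + (\<Sum>i<j'. k' i)"
        using sum.lessThan_Suc_shift[of k j'] j0 unfolding j'_def k'_def K_def by simp
      have lt: "(\<Sum>i<n'. k' i) < N" using sumk K0 eqN by simp
      have kmono': "\<And>i i'. i \<le> i' \<Longrightarrow> i' < n' \<Longrightarrow> k' i' \<le> k' i"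
        unfolding k'_def n'_def by (rule kmono) auto
      have jn': "j' \<le> n'" using jn unfolding j'_def n'_def by simp
      have W': "subspace W'" unfolding W'_def using subspace_Rsp W by simp
      have WW': "W \<subseteq> W'" unfolding W'_def by (rule W_Rsp)
      have W'V: "W' \<subseteq> V" unfolding W'_def using Rsp_sub V WV gqV by simp
      have gqW': "gq \<in> W'" unfolding W'_def using g_Rsp W by simp
      have scW': "\<And>c w. w \<in> W \<Longrightarrow> w + sN c gq \<in> W'" unfolding W'_def Rsp_def by blast
      have H4': "\<forall>i<n'. sN (p^k' i) (f (e' i)) \<in> W'"
      proof (intro allI impI)
        fix i assume i: "i < n'"
        then have si: "swp pp (Suc i) < n" using swp_lt[OF pp(1)] unfolding n'_def by blast
        then have "sN (p^k (swp pp (Suc i))) (f (e (swp pp (Suc i)))) \<in> W" using H4 by blast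
        then have "sN (p^k' i) (f (e' i)) \<in> W" using k'e[OF i] unfolding e'_def by simp
        then show "sN (p^k' i) (f (e' i)) \<in> W'" using WW' by blast
      qed
      have eV': "\<forall>i<n'. f (e' i) \<in> V"
      proof (intro allI impI)
        fix i assume i: "i < n'"
        then have "swp pp (Suc i) < n" using swp_lt[OF pp(1)] unfolding n'_def by blast
        then show "f (e' i) \<in> V" using eV unfolding e'_def by blast
      qed
      have H5': "\<forall>v\<in>V. \<exists>r. v - f (\<Sum>i<n'. sM (r i) (e' i)) \<in> W'"
      proof
        fix v assume "v \<in> V"
        then obtain r where r: "v - f (\<Sum>i<n. sM (r i) (e i)) \<in> W" using H5 by blast
        define c where "c = r pp * u"
        define r' where "r' i = r (swp pp (Suc i)) - c * r0 (swp pp (Suc i))" for i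
        have xs: "x = sM (r0 pp) (e pp) + (\<Sum>i<n'. sM (r0 (swp pp (Suc i))) (e' i))"
          unfolding x_def e'_def n'_def by (rule swp_sum[OF pp(1)])
        have "(\<Sum>i<n. sM (r i) (e i)) = sM (r pp) (e pp) + (\<Sum>i<n'. sM (r (swp pp (Suc i))) (e' i))"
          unfolding e'_def n'_def by (rule swp_sum[OF pp(1)])
        also have "sM (r pp) (e pp) = sM c (sM (r0 pp) (e pp))"
          unfolding c_def using u by (simp add: ac_simps) (metis mult.assoc mult.commute mult_1_right)
        also have "sM (r0 pp) (e pp) = x - (\<Sum>i<n'. sM (r0 (swp pp (Suc i))) (e' i))"
          using xs by simp
        finally have "(\<Sum>i<n. sM (r i) (e i)) = sM c x + (\<Sum>i<n'. sM (r' i) (e' i))"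
          unfolding r'_def by (simp add: M.scale_right_diff_distrib M.scale_sum_right
              M.scale_left_diff_distrib sum_subtractf algebra_simps)
        then have "v - f (\<Sum>i<n'. sM (r' i) (e' i)) = (v - f (\<Sum>i<n. sM (r i) (e i))) + sN c (f x)"
          by (simp add: fadd fsc)
        also have "\<dots> = ((v - f (\<Sum>i<n. sM (r i) (e i))) - sN c (gq - f x)) + sN c gq"
          by (simp add: scale_right_diff_distrib)
        also have "\<dots> \<in> W'" using r gx W subspace_diff subspace_scale scW' by simp
        finally show "\<exists>r. v - f (\<Sum>i<n'. sM (r i) (e' i)) \<in> W'" by blast
      qed
      have gV': "\<forall>i<j'. g' i \<in> V" using gV swp_lt[OF q(1)] unfolding g'_def j'_def by auto
      have H6': "\<forall>v\<in>V. \<exists>r. v - (\<Sum>i<j'. sN (r i) (g' i)) \<in> W'"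
      proof
        fix v assume "v \<in> V"
        then obtain r where r: "v - (\<Sum>i<j. sN (r i) (g i)) \<in> W" using H6 by blast
        have "(\<Sum>i<j. sN (r i) (g i)) = sN (r q) gq + (\<Sum>i<j'. sN (r (swp q (Suc i))) (g' i))"
          unfolding g'_def j'_def gq_def by (rule swp_sum[OF q(1)])
        then have "v - (\<Sum>i<j'. sN (r (swp q (Suc i))) (g' i)) = (v - (\<Sum>i<j. sN (r i) (g i))) + sN (r q) gq"
          by (simp add: algebra_simps)
        also have "\<dots> \<in> W'" using r scW' by simp
        finally have "v - (\<Sum>i<j'. sN (r (swp q (Suc i))) (g' i)) \<in> W'" .
        then show "\<exists>r. v - (\<Sum>i<j'. sN (r i) (g' i)) \<in> W'" by (intro exI[of _ "\<lambda>i. r (swp q (Suc i))"])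
      qed
      have IH: "bnd sN W' V (\<Sum>i<j'. k' i) \<and> ((\<forall>i<n'. sM (p^k' i) (e' i) = 0) \<and> (\<exists>c l. chainin sN W' V c l \<and> l \<ge> (\<Sum>i<j'. k' i)) \<longrightarrow> concl W' V)"
      proof -
        have "HH n' k' e' g' W' V j'" unfolding HH_def using kmono' jn' W' V W'V H4' eV' H5' gV' H6' by blast
        then have "CC n' k' e' W' V j'" using less.IH[OF lt] by blast
        then show ?thesis unfolding CC_def .
      qed
      have pKfx: "sN (p^K) (f x) \<in> W"
      proof -
        have "sN (p^K) (f x) = (\<Sum>i<n. sN (r0 i * p^(K - k i)) (sN (p^k i) (f (e i))))"
          unfolding fx scale_sum_right
        proof (rule sum.cong[OF refl])
          fix i assume "i \<in> {..<n}"
          then have "K = (K - k i) + k i" using kK by simp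
            then have "p^K = p^(K - k i) * p^(k i)" by (metis power_add)
          then show "sN (p^K) (sN (r0 i) (f (e i))) = sN (r0 i * p^(K - k i)) (sN (p^k i) (f (e i)))"
            by (simp add: ac_simps)
        qed
        moreover have "(\<Sum>i<n. sN (r0 i * p^(K - k i)) (sN (p^k i) (f (e i)))) \<in> W"
        proof (rule subspace_sum[OF W])
          fix i assume "i \<in> {..<n}"
          then have "sN (p^k i) (f (e i)) \<in> W" using H4 by blast
          then show "sN (r0 i * p^(K - k i)) (sN (p^k i) (f (e i))) \<in> W" by (rule subspace_scale[OF W])
        qed
        ultimately show ?thesis by simp
      qed
      have pKg: "sN (p^K) gq \<in> W"
      proof -
        have "sN (p^K) gq = sN (p^K) (gq - f x) + sN (p^K) (f x)" by (simp add: algebra_simps)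
        moreover have "sN (p^K) (gq - f x) \<in> W" by (rule subspace_scale[OF W gx])
        ultimately show ?thesis using subspace_add[OF W _ pKfx] by simp
      qed
      have bK: "bnd sN W W' K" unfolding W'_def using cyclic_bnd[OF W pKg] .
      have bS: "bnd sN W V ?S" unfolding sumS
        using subadd[OF W' V WW' W'V bK] IH by blast
      show ?thesis
      proof (intro conjI impI)
        show "bnd sN W V ?S" by (rule bS)
        assume prem: "(\<forall>i<n. sM (p^k i) (e i) = 0) \<and> (\<exists>c l. chainin sN W V c l \<and> l \<ge> ?S)"
        have strong': "\<forall>i<n'. sM (p^k' i) (e' i) = 0"
          using prem k'e swp_lt[OF pp(1)] unfolding e'_def n'_def by auto
        have ch': "\<exists>c l. chainin sN W' V c l \<and> l \<ge> (\<Sum>i<j'. k' i)"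
        proof (rule ccontr)
          assume nch: "\<not> ?thesis"
          have "chainin sN W' V (\<lambda>_. W') 0" unfolding chainin_def using W' W'V by auto
          then have pos: "(\<Sum>i<j'. k' i) > 0" using nch by (metis not_gr_zero le0)
          have "bnd sN W' V ((\<Sum>i<j'. k' i) - 1)" unfolding bnd_def using nch pos by fastforce
          then have "bnd sN W V (K + ((\<Sum>i<j'. k' i) - 1))" using subadd[OF W' V WW' W'V bK] by blast
          then show False using prem pos unfolding bnd_def sumS by fastforce
        qed
        then obtain A1 where A1: "M.subspace A1" "\<forall>a\<in>A1. f a \<in> W' \<longrightarrow> a = 0"
          "\<forall>v\<in>V. \<exists>a\<in>A1. v - f a \<in> W'" "\<forall>a\<in>A1. f a \<in> V"
          using IH strong' unfolding concl_def by blast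
        have pKx: "sM (p^K) x = 0"
        proof -
          have "sM (p^K) x = (\<Sum>i<n. sM (r0 i * p^(K - k i)) (sM (p^k i) (e i)))"
            unfolding x_def M.scale_sum_right
          proof (rule sum.cong[OF refl])
            fix i assume "i \<in> {..<n}"
            then have "K = (K - k i) + k i" using kK by simp
            then have "p^K = p^(K - k i) * p^(k i)" by (metis power_add)
            then show "sM (p^K) (sM (r0 i) (e i)) = sM (r0 i * p^(K - k i)) (sM (p^k i) (e i))"
              by (simp add: ac_simps)
          qed
          then show ?thesis using prem by simp
        qed
        show "concl W V" unfolding concl_def
        proof (intro exI[of _ "Rsp sM A1 x"] conjI ballI impI)
          show "M.subspace (Rsp sM A1 x)" using M.subspace_Rsp A1(1) by simp
        next
          fix a assume "a \<in> Rsp sM A1 x"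
          then obtain a1 t where a: "a = a1 + sM t x" "a1 \<in> A1" unfolding Rsp_def by auto
          show "f a \<in> V" unfolding a fadd fsc using A1(4) a(2) fxV V subspace_add subspace_scale by simp
        next
          fix v assume "v \<in> V"
          then obtain a1 where a1: "a1 \<in> A1" "v - f a1 \<in> W'" using A1(3) by blast
          then obtain w t where wt: "v - f a1 = w + sN t gq" "w \<in> W" unfolding W'_def Rsp_def by auto
          have "v - f (a1 + sM t x) = w + sN t (gq - f x)" using wt(1) unfolding fadd fsc
            by (simp add: algebra_simps)
          also have "\<dots> \<in> W" using wt(2) gx W subspace_add subspace_scale by simp
          finally show "\<exists>a\<in>Rsp sM A1 x. v - f a \<in> W" using a1(1) unfolding Rsp_def by blast
        next
          fix a assume "a \<in> Rsp sM A1 x" and faW: "f a \<in> W"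
          then obtain a1 t where a: "a = a1 + sM t x" "a1 \<in> A1" unfolding Rsp_def by auto
          have "f a1 = (f a + sN t (gq - f x)) + sN (- t) gq" unfolding a fadd fsc
            by (simp add: algebra_simps)
          also have "\<dots> \<in> W'" by (rule scW'[OF subspace_add[OF W faW subspace_scale[OF W gx]]])
          finally have a10: "a1 = 0" using A1(2) a(2) by blast
          then have "sN t (f x) \<in> W" using faW a fadd fsc by simp
          then have "sN t gq \<in> W" by (rule sub_scale_diffI[OF W gx])
          then have "p^Suc (K-1) dvd t" using order_lemma[OF W, of "K-1" gq t] q gq_def by blast
          then obtain z where "t = p^K * z" using K0 by (auto elim!: dvdE)
          then have "sM t x = 0" using pKx by (simp add: mult.commute flip: M.scale_scale)
          then show "a = 0" using a a10 by simp
        qed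
      qed
    qed
  qed
  then show "CC n k e W V j" unfolding CC_def .
  qed
qed
  
end


lemma span_sums:
  assumes mo: "module s" and x: "x \<in> module.span s (g ` {..<(j::nat)})"
  shows "\<exists>r. x = (\<Sum>i<j. s (r i) (g i))"
proof (rule module.span_induct_alt[OF mo x, where h="\<lambda>x. \<exists>r. x = (\<Sum>i<j. s (r i) (g i))"])
  show "\<exists>r. 0 = (\<Sum>i<j. s (r i) (g i))"
    by (intro exI[of _ "\<lambda>_. 0"]) (simp add: module.scale_zero_left[OF mo])
next
  fix c x y assume xg: "x \<in> g ` {..<j}" and "\<exists>r. y = (\<Sum>i<j. s (r i) (g i))"
  then obtain r where r: "y = (\<Sum>i<j. s (r i) (g i))" by blast
  from xg obtain i0 where i0: "i0 < j" "x = g i0" by blast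
  have "(\<Sum>i<j. s (r i + (if i = i0 then c else 0)) (g i)) = (\<Sum>i<j. s (r i) (g i)) + (\<Sum>i<j. s (if i = i0 then c else 0) (g i))"
    by (simp add: module.scale_left_distrib[OF mo] sum.distrib)
  also have "(\<Sum>i<j. s (if i = i0 then c else 0) (g i)) = (\<Sum>i<j. if i = i0 then s c (g i) else 0)"
    by (rule sum.cong) (auto simp: module.scale_zero_left[OF mo])
  also have "\<dots> = s c x" using i0 by simp
  finally show "\<exists>r. s c x + y = (\<Sum>i<j. s (r i) (g i))" using r
    by (intro exI[of _ "\<lambda>i. r i + (if i = i0 then c else 0)"]) (simp add: add.commute)
qed

theorem lemma4p6:
  fixes m :: "'a::idom set"
    and sM :: "'a \<Rightarrow> 'm::ab_group_add \<Rightarrow> 'm"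
    and sN :: "'a \<Rightarrow> 'n::ab_group_add \<Rightarrow> 'n"
    and k :: "nat \<Rightarrow> nat" and n j :: nat
  assumes dvr: "is_DVR TYPE('a)"
    and max: "maximal_ideal m"
    and modM: "module sM" and modN: "module sN"
    and k_mono: "\<And>i i'. i \<le> i' \<Longrightarrow> i' < n \<Longrightarrow> k i' \<le> k i"
    and M_iso: "iso_sum_cyclic sM m k n"
    and quot: "\<exists>f. module_hom sM sN f \<and> surj f"
    and gen: "\<exists>g :: nat \<Rightarrow> 'n. module.span sN (g ` {..<j}) = UNIV"
    and jn: "j \<le> n"
  shows "module_length sN \<le> enat (\<Sum>i<j. k i)
    \<and> (module_length sN = enat (\<Sum>i<j. k i) \<longrightarrow> iso_direct_summand sN sM)"
proof -
  obtain p where mp: "m = {p * x | x. True}" using dvr_principal[OF dvr max] by blast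
  have loc: "\<And>r. r \<notin> m \<Longrightarrow> r dvd 1" using dvr_local[OF dvr max] by blast
  obtain f where fh: "module_hom sM sN f" and fs: "surj f" using quot by blast
  obtain g :: "nat \<Rightarrow> 'n" where gs: "module.span sN (g ` {..<j}) = UNIV" using gen by blast
  obtain e where egen: "\<forall>x. \<exists>r. x = (\<Sum>i<n. sM (r i) (e i))"
    and eind: "\<forall>r. (\<Sum>i<n. sM (r i) (e i)) = 0 \<longleftrightarrow> (\<forall>i<n. r i \<in> ideal_pow m (k i))"
    using M_iso unfolding iso_sum_cyclic_def by blast
  have ip: "\<And>t. ideal_pow m t = {p^t * x | x. True}" using ideal_pow_eq[OF mp] by blast
  have cc: "core_ctx sN m p sM f"
    unfolding core_ctx_def dvrmod_def dvrmod_axioms_def core_ctx_axioms_def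
    using modN modM max mp loc fh by blast
  interpret C: core_ctx sN m p sM f by (rule cc)
  have strong: "\<forall>i<n. sM (p^k i) (e i) = 0"
  proof (intro allI impI)
    fix i assume i: "i < n"
    let ?r = "\<lambda>l. if l = i then p^k i else 0"
    have "(\<Sum>l<n. sM (?r l) (e l)) = (\<Sum>l<n. if l = i then sM (p^k i) (e l) else 0)"
      by (rule sum.cong) auto
    also have "\<dots> = sM (p^k i) (e i)" using i by simp
    finally have eq: "(\<Sum>l<n. sM (?r l) (e l)) = sM (p^k i) (e i)" .
    have "\<forall>l<n. ?r l \<in> ideal_pow m (k l)"
    proof (intro allI impI)
      fix l assume "l < n"
      show "?r l \<in> ideal_pow m (k l)"
      proof (cases "l = i")
        case True
        then have "?r l = p^k l * 1" by simp
        then show ?thesis unfolding ip by blast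
      next
        case False
        then have "?r l = p^k l * 0" by simp
        then show ?thesis unfolding ip by blast
      qed
    qed
    then have "(\<Sum>l<n. sM (?r l) (e l)) = 0" using spec[OF eind, of ?r] by blast
    then show "sM (p^k i) (e i) = 0" using eq by simp
  qed
  have HH: "C.HH n k e g {0} UNIV j"
    unfolding C.HH_def
  proof (intro conjI allI impI ballI)
    show "\<And>i i'. i \<le> i' \<Longrightarrow> i' < n \<Longrightarrow> k i' \<le> k i" by (rule k_mono)
    show "j \<le> n" by (rule jn)
    show "C.subspace {0}" by simp
    show "C.subspace UNIV" by simp
    show "{0} \<subseteq> UNIV" by simp
    fix i assume "i < n"
    then have "sM (p^k i) (e i) = 0" using strong by blast
    then have "sN (p^k i) (f (e i)) = 0" using C.fsc C.fzero by metis
    then show "sN (p^k i) (f (e i)) \<in> {0}" by simp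
  next
    fix i show "f (e i) \<in> UNIV" by simp
  next
    fix v :: 'n
    obtain y where "v = f y" using fs by (metis surjD)
    moreover obtain r where "y = (\<Sum>i<n. sM (r i) (e i))" using egen by blast
    ultimately have "v - f (\<Sum>i<n. sM (r i) (e i)) \<in> {0}" by simp
    then show "\<exists>r. v - f (\<Sum>i<n. sM (r i) (e i)) \<in> {0}" by blast
  next
    fix i show "g i \<in> UNIV" by simp
  next
    fix v :: 'n
    have "v \<in> module.span sN (g ` {..<j})" using gs by simp
    then obtain r where "v = (\<Sum>i<j. sN (r i) (g i))" using span_sums[OF modN] by blast
    then have "v - (\<Sum>i<j. sN (r i) (g i)) \<in> {0}" by simp
    then show "\<exists>r. v - (\<Sum>i<j. sN (r i) (g i)) \<in> {0}" by blast
  qed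
  have "C.CC n k e {0} UNIV j" using C.core HH by blast
  then have bnd: "bnd sN {0} UNIV (\<Sum>i<j. k i)"
    and eqc: "(\<exists>c l. chainin sN {0} UNIV c l \<and> l \<ge> (\<Sum>i<j. k i)) \<Longrightarrow> C.concl {0} UNIV"
    unfolding C.CC_def using strong by blast+
  let ?L = "{enat l | l. \<exists>c :: nat \<Rightarrow> 'n set. (\<forall>i\<le>l. module.subspace sN (c i)) \<and> (\<forall>i<l. c i \<subset> c (Suc i))}"
  have chain_conv: "chainin sN {0} UNIV c l" if "\<forall>i\<le>l. module.subspace sN (c i)" "\<forall>i<l. c i \<subset> c (Suc i)" for c l
    unfolding chainin_def using that C.subspace_0 by blast
  have ml: "module_length sN = Sup ?L" unfolding module_length_def by simp
  have le: "module_length sN \<le> enat (\<Sum>i<j. k i)"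
    unfolding ml
  proof (rule Sup_least)
    fix z assume "z \<in> ?L"
    then obtain l c where z: "z = enat l" "\<forall>i\<le>l. module.subspace sN (c i)" "\<forall>i<l. c i \<subset> c (Suc i)" by blast
    then have "l \<le> (\<Sum>i<j. k i)" using bnd chain_conv unfolding bnd_def by blast
    then show "z \<le> enat (\<Sum>i<j. k i)" using z by simp
  qed
  have eqcase: "iso_direct_summand sN sM" if meq: "module_length sN = enat (\<Sum>i<j. k i)"
  proof -
    let ?S = "\<Sum>i<j. k i"
    have "\<exists>c l. chainin sN {0} UNIV c l \<and> l \<ge> ?S"
    proof (rule ccontr)
      assume nc: "\<not> ?thesis"
      have "chainin sN {0} UNIV (\<lambda>_. {0}) 0" by (rule chain_conv) auto
      then have S0: "?S > 0" using nc by (metis not_gr_zero le0)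
      have "module_length sN \<le> enat (?S - 1)"
        unfolding ml
      proof (rule Sup_least)
        fix z assume "z \<in> ?L"
        then obtain l c where z: "z = enat l" "\<forall>i\<le>l. module.subspace sN (c i)" "\<forall>i<l. c i \<subset> c (Suc i)" by blast
        then have "chainin sN {0} UNIV c l" using chain_conv by blast
        then have "\<not> l \<ge> ?S" using nc by blast
        then show "z \<le> enat (?S - 1)" using z by simp
      qed
      then show False using meq S0 by simp
    qed
    then have "C.concl {0} UNIV" by (rule eqc)
    then obtain A where A: "module.subspace sM A" "\<forall>a\<in>A. f a \<in> {0} \<longrightarrow> a = 0"
      "\<forall>v\<in>UNIV. \<exists>a\<in>A. v - f a \<in> {0}"
      unfolding C.concl_def by blast
    have A0: "\<And>a. a \<in> A \<Longrightarrow> f a = 0 \<Longrightarrow> a = 0" using A(2) by simp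
    have Aex: "\<exists>a\<in>A. f a = v" for v
    proof -
      obtain a where "a \<in> A" "v - f a \<in> {0}" using A(3) by blast
      then show ?thesis by auto
    qed
    have Auniq: "\<And>a b. a \<in> A \<Longrightarrow> b \<in> A \<Longrightarrow> f a = f b \<Longrightarrow> a = b"
    proof -
      fix a b assume ab: "a \<in> A" "b \<in> A" "f a = f b"
      then have "a - b \<in> A" using C.M.subspace_diff A(1) by blast
      moreover have "f (a - b) = 0" using ab C.fdiff by simp
      ultimately have "a - b = 0" using A0 by blast
      then show "a = b" by simp
    qed
    define h where "h v = (THE a. a \<in> A \<and> f a = v)" for v
    have hA: "h v \<in> A \<and> f (h v) = v" for v
    proof -
      have "\<exists>!a. a \<in> A \<and> f a = v" using Aex Auniq by blast
      then show ?thesis unfolding h_def by (rule theI')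
    qed
    have hu: "h v = a" if "a \<in> A" "f a = v" for a v
      using Auniq[of "h v" a] hA[of v] that by simp
    have hadd: "h (v + w) = h v + h w" for v w
    proof (rule hu)
      have "h v \<in> A" "h w \<in> A" using hA by blast+
      then show "h v + h w \<in> A" by (rule C.M.subspace_add[OF A(1)])
      have "f (h v) = v" "f (h w) = w" using hA by blast+
      then show "f (h v + h w) = v + w" by (simp add: C.fadd)
    qed
    have hsc: "h (sN c v) = sM c (h v)" for c v
    proof (rule hu)
      have "h v \<in> A" using hA by blast
      then show "sM c (h v) \<in> A" by (rule C.M.subspace_scale[OF A(1)])
      have "f (h v) = v" using hA by blast
      then show "f (sM c (h v)) = sN c v" by (simp add: C.fsc)
    qed
    have hh: "module_hom sN sM h"
      unfolding module_hom_def module_hom_axioms_def using modN modM hadd hsc by blast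
    have injh: "inj h"
    proof (rule injI)
      fix v w assume "h v = h w"
      then have "f (h v) = f (h w)" by simp
      then show "v = w" using hA by simp
    qed
    have rh: "range h = A"
    proof
      show "range h \<subseteq> A" using hA by blast
      show "A \<subseteq> range h"
      proof
        fix a assume "a \<in> A"
        then have "h (f a) = a" using hu by blast
        then show "a \<in> range h" by (metis rangeI)
      qed
    qed
    have Bsub: "module.subspace sM {x. f x = 0}" using module_hom.subspace_kernel[OF fh] .
    show ?thesis unfolding iso_direct_summand_def
    proof (intro exI conjI)
      show "module.subspace sM A" by (rule A(1))
      show "module.subspace sM {x. f x = 0}" by (rule Bsub)
      show "A \<inter> {x. f x = 0} = {0}"
      proof
        show "A \<inter> {x. f x = 0} \<subseteq> {0}" using A0 by blast
        show "{0} \<subseteq> A \<inter> {x. f x = 0}" using C.M.subspace_0[OF A(1)] C.fzero by simp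
      qed
      show "\<forall>x. \<exists>a\<in>A. \<exists>b\<in>{x. f x = 0}. x = a + b"
      proof
        fix x
        obtain a where a: "a \<in> A" "f a = f x" using Aex by blast
        then have "f (x - a) = 0" using C.fdiff by simp
        then show "\<exists>a\<in>A. \<exists>b\<in>{x. f x = 0}. x = a + b" using a by (intro bexI[of _ a] bexI[of _ "x - a"]) auto
      qed
      show "module_hom sN sM h" by (rule hh)
      show "inj h" by (rule injh)
      show "range h = A" by (rule rh)
    qed
  qed
  show ?thesis using le eqcase by blast
qed

end
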